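(* Let $n\ge5$ and $S=\{1,s\}\subset\mathbb Z_n$ with $s$ an integer, $1<s<n/2$. Let $\mathbb K$ be a field of characteristic $0$. (1) If $s=2$, then for every $m\ge1$, $\Omega_m(\vec C_n^S)$ has the basis of $2n$ elements $\{\alpha_a^{(m)},\beta_a^{(m)}\}_{a\in\mathbb Z_n}$, where \[\alpha_a^{(m)}=e_{a,(a+1),\ldots,(a+m)},\qquad \beta_a^{(m)}=\sum_{j=1}^m(-1)^{m-j}\,e_{a,a+1,\ldots,a+j-1,a+j+1,a+j+2,\ldots,a+m+1}\] (indices mod $n$). (2) If $s\ne2$, then $\Omega_2(\vec C_n^S)$ has the basis of $n$ elements $\{\gamma_a\}_{a\in\mathbb Z_n}$ with $\gamma_a=e_{a,a+1,a+1+s}-e_{a,a+s,a+1+s}$, and $\Omega_m(\vec C_n^S)=0$ for all $m\ge3$.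
   Context: GLMY path complex over a field $\mathbb K$ of characteristic $0$: elementary paths $e_{v_0\cdots v_n}$, boundary $\partial e_{v_0\cdots v_n}=\sum_{j}(-1)^j e_{v_0\cdots\widehat{v_j}\cdots v_n}$, paths with two equal consecutive vertices set to $0$; $A_n(G)$ = span of paths along arrows of $G$; $\Omega_0=A_0$, $\Omega_1=A_1$, $\Omega_n=\{u\in A_n:\partial u\in A_{n-1}\}$. The circulant digraph $\vec{C}_n^S$ has vertex set $\mathbb Z_n$ and an arrow $a\to a+s$ for each $a\in\mathbb Z_n$, $s\in S$. *)

theory Defs
  imports Complex_Main "HOL-Library.Function_Algebras"
begin

text \<open>Vertices of the circulant digraph are the naturals 0..n-1 (representing Z_n).
  Elementary paths are vertex lists; a chain is a function from vertex lists to the field.\<close>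

definition arrow :: "nat \<Rightarrow> nat set \<Rightarrow> nat \<Rightarrow> nat \<Rightarrow> bool" where
  "arrow n S a b \<longleftrightarrow> a < n \<and> (\<exists>t\<in>S. b = (a + t) mod n)"

definition allowed :: "nat \<Rightarrow> nat set \<Rightarrow> nat list \<Rightarrow> bool" where
  "allowed n S p \<longleftrightarrow> set p \<subseteq> {0..<n} \<and> (\<forall>i. Suc i < length p \<longrightarrow> arrow n S (p!i) (p!Suc i))"

definition regular :: "nat list \<Rightarrow> bool" where
  "regular p \<longleftrightarrow> (\<forall>i. Suc i < length p \<longrightarrow> p!i \<noteq> p!Suc i)"

text \<open>elementary path; non-regular paths are identified with 0\<close>
definition epath :: "nat list \<Rightarrow> nat list \<Rightarrow> 'k::field" where
  "epath p = (\<lambda>q. if regular p \<and> q = p then 1 else 0)"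

definition del_at :: "nat \<Rightarrow> nat list \<Rightarrow> nat list" where
  "del_at j p = take j p @ drop (Suc j) p"

definition paths_len :: "nat \<Rightarrow> nat \<Rightarrow> nat list set" where
  "paths_len n l = {p. length p = l \<and> set p \<subseteq> {0..<n}}"

text \<open>boundary of a chain supported on vertex lists with entries < n\<close>
definition boundary :: "nat \<Rightarrow> (nat list \<Rightarrow> 'k::field) \<Rightarrow> nat list \<Rightarrow> 'k" where
  "boundary n u q = (if regular q then
     (\<Sum>p\<in>paths_len n (Suc (length q)). \<Sum>j<length p.
        if del_at j p = q then (-1)^j * u p else 0) else 0)"

text \<open>A_m: span of allowed elementary m-paths (lists of m+1 vertices)\<close>
definition A_space :: "nat \<Rightarrow> nat set \<Rightarrow> nat \<Rightarrow> (nat list \<Rightarrow> 'k::field) set" where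
  "A_space n S m = {u. \<forall>p. u p \<noteq> 0 \<longrightarrow> length p = Suc m \<and> allowed n S p \<and> regular p}"

definition Omega :: "nat \<Rightarrow> nat set \<Rightarrow> nat \<Rightarrow> (nat list \<Rightarrow> 'k::field) set" where
  "Omega n S m = {u \<in> A_space n S m. m = 0 \<or> boundary n u \<in> A_space n S (m - 1)}"

definition cscale :: "'k::field \<Rightarrow> (nat list \<Rightarrow> 'k) \<Rightarrow> nat list \<Rightarrow> 'k" where
  "cscale c u = (\<lambda>p. c * u p)"

definition is_basis :: "(nat list \<Rightarrow> 'k::field) set \<Rightarrow> (nat list \<Rightarrow> 'k) set \<Rightarrow> bool" where
  "is_basis B V \<longleftrightarrow> \<not> module.dependent cscale B \<and> module.span cscale B = V"

definition alpha :: "nat \<Rightarrow> nat \<Rightarrow> nat \<Rightarrow> nat list \<Rightarrow> 'k::field" where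
  "alpha n m a = epath (map (\<lambda>i. (a + i) mod n) [0..<Suc m])"

definition beta :: "nat \<Rightarrow> nat \<Rightarrow> nat \<Rightarrow> nat list \<Rightarrow> 'k::field" where
  "beta n m a = (\<lambda>q. \<Sum>j=1..m. (-1)^(m-j) *
      epath (map (\<lambda>i. (a + i) mod n) ([0..<j] @ [Suc j..<m+2])) q)"

definition gamma :: "nat \<Rightarrow> nat \<Rightarrow> nat \<Rightarrow> nat list \<Rightarrow> 'k::field" where
  "gamma n s a = (\<lambda>q. epath [a, (a+1) mod n, (a+1+s) mod n] q
                     - epath [a, (a+s) mod n, (a+1+s) mod n] q)"

end

theory Submission
  imports Defs "HOL-Number_Theory.Cong"
begin
lemma sum_fun_apply: "(sum f A) x = (\<Sum>a\<in>A. f a x)"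
  by (induct A rule: infinite_finite_induct) auto

lemma module_cscale: "module (cscale :: 'k::field \<Rightarrow> (nat list \<Rightarrow> 'k) \<Rightarrow> _)"
  by unfold_locales (auto simp: cscale_def fun_eq_iff algebra_simps)

lemma basis_crit:
  fixes f :: "'i \<Rightarrow> nat list \<Rightarrow> 'k::field" and pt :: "'i \<Rightarrow> nat list"
  assumes fin: "finite I"
    and nz: "\<And>i. i \<in> I \<Longrightarrow> f i (pt i) \<noteq> 0"
    and z: "\<And>i j. i \<in> I \<Longrightarrow> j \<in> I \<Longrightarrow> j \<noteq> i \<Longrightarrow> f j (pt i) = 0"
    and inV: "\<And>i. i \<in> I \<Longrightarrow> f i \<in> V"
    and sub: "module.subspace cscale V"
    and van: "\<And>v. v \<in> V \<Longrightarrow> (\<And>i. i \<in> I \<Longrightarrow> v (pt i) = 0) \<Longrightarrow> v = 0"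
  shows "is_basis (f ` I) V \<and> card (f ` I) = card I"
proof -
  interpret M: module "cscale :: 'k \<Rightarrow> (nat list \<Rightarrow> 'k) \<Rightarrow> _" by (rule module_cscale)
  have inj: "inj_on f I"
  proof (rule inj_onI)
    fix i j assume ij: "i \<in> I" "j \<in> I" "f i = f j"
    show "i = j" using nz[OF ij(1)] z[OF ij(1) ij(2)] ij(3) by metis
  qed
  have ind: "\<not> M.dependent (f ` I)"
    unfolding M.independent_explicit_module
  proof (intro allI impI)
    fix t c v assume t: "finite t" "t \<subseteq> f ` I" "(\<Sum>v\<in>t. cscale (c v) v) = 0" "v \<in> t"
    then obtain i where i: "i \<in> I" "v = f i" by auto
    have "0 = (\<Sum>v\<in>t. cscale (c v) v) (pt i)" using t(3) by simp
    also have "\<dots> = (\<Sum>w\<in>t. c w * w (pt i))" by (simp add: sum_fun_apply cscale_def)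
    also have "\<dots> = c v * v (pt i)"
    proof (rule sum.remove[OF t(1) t(4), THEN trans])
      have "(\<Sum>w\<in>t - {v}. c w * w (pt i)) = 0"
      proof (rule sum.neutral, rule ballI)
        fix w assume "w \<in> t - {v}"
        with t(2) obtain j where "j \<in> I" "w = f j" "j \<noteq> i" using i by auto
        thus "c w * w (pt i) = 0" using z[OF i(1)] by simp
      qed
      thus "c v * v (pt i) + (\<Sum>w\<in>t - {v}. c w * w (pt i)) = c v * v (pt i)" by simp
    qed
    finally show "c v = 0" using nz[OF i(1)] i(2) by simp
  qed
  have "M.span (f ` I) \<subseteq> V" by (rule M.span_minimal[OF _ sub]) (use inV in auto)
  moreover have "V \<subseteq> M.span (f ` I)"
  proof
    fix u assume u: "u \<in> V"
    define r where "r = (\<Sum>i\<in>I. cscale (u (pt i) / f i (pt i)) (f i))"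
    have rV: "r \<in> V" unfolding r_def
      by (rule M.subspace_sum[OF sub]) (intro M.subspace_scale[OF sub] inV)
    have rS: "r \<in> M.span (f ` I)" unfolding r_def
      by (intro M.span_sum M.span_scale M.span_base) auto
    have "u - r = 0"
    proof (rule van)
      show "u - r \<in> V" by (rule M.subspace_diff[OF sub u rV])
      fix k assume k: "k \<in> I"
      have "r (pt k) = (\<Sum>i\<in>I. u (pt i) / f i (pt i) * f i (pt k))"
        by (simp add: r_def sum_fun_apply cscale_def)
      also have "\<dots> = u (pt k) / f k (pt k) * f k (pt k)"
        by (rule sum.remove[OF fin k, THEN trans]) (simp add: z[OF k] sum.neutral)
      also have "\<dots> = u (pt k)" using nz[OF k] by simp
      finally show "(u - r) (pt k) = 0" by simp
    qed
    hence "u = r" by simp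
    thus "u \<in> M.span (f ` I)" using rS by simp
  qed
  ultimately show ?thesis using ind inj by (auto simp: is_basis_def card_image)
qed

definition ins :: "nat \<Rightarrow> nat \<Rightarrow> nat list \<Rightarrow> nat list" where
  "ins j x q = take j q @ x # drop j q"

lemma length_del_at: "j < length p \<Longrightarrow> length (del_at j p) = length p - 1"
  by (simp add: del_at_def)

lemma nth_del_at: "j < length p \<Longrightarrow> i < length p - 1 \<Longrightarrow>
   del_at j p ! i = (if i < j then p ! i else p ! Suc i)"
  by (auto simp: del_at_def nth_append min_def)

lemma set_del_at: "set (del_at j p) \<subseteq> set p"
  unfolding del_at_def by (auto dest: in_set_takeD in_set_dropD)

lemma del_at_ins: "j \<le> length q \<Longrightarrow> del_at j (ins j x q) = q"
  by (simp add: del_at_def ins_def min_def)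

lemma ins_del_at: "j < length p \<Longrightarrow> ins j (p ! j) (del_at j p) = p"
  by (simp add: del_at_def ins_def min_def id_take_nth_drop[symmetric])

lemma ins_del_at_upd: "j < length p \<Longrightarrow> ins j x (del_at j p) = p[j := x]"
  by (simp add: del_at_def ins_def min_def upd_conv_take_nth_drop)

lemma length_ins: "length (ins j x q) = Suc (length q)"
  by (simp add: ins_def)

lemma nth_ins_j: "j \<le> length q \<Longrightarrow> ins j x q ! j = x"
  by (simp add: ins_def nth_append min_def)

lemma set_ins: "set (ins j x q) \<subseteq> insert x (set q)"
  unfolding ins_def by (auto dest: in_set_takeD in_set_dropD)

lemma finite_paths_len: "finite (paths_len n l)"
proof -
  have "paths_len n l = {xs. set xs \<subseteq> {0..<n} \<and> length xs = l}" by (auto simp: paths_len_def)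
  thus ?thesis using finite_lists_length_eq[of "{0..<n}" l] by simp
qed

lemma face:
  fixes u :: "nat list \<Rightarrow> 'k::field"
  assumes u: "u \<in> A_space n S m" and lq: "length q = m" and rq: "regular q"
    and sq: "set q \<subseteq> {0..<n}" and j: "0 < j" "j < m"
    and na: "\<not> arrow n S (q!(j-1)) (q!j)"
  shows "boundary n u q = (-1)^j * (\<Sum>x<n. u (ins j x q))"
proof -
  let ?PL = "paths_len n (Suc m)"
  have step1: "(\<Sum>k<length p. if del_at k p = q then (-1)^k * u p else 0)
      = (if del_at j p = q then (-1)^j * u p else 0)" if p: "p \<in> ?PL" for p
  proof (cases "u p = 0")
    case True thus ?thesis by (simp add: sum.neutral)
  next
    case False
    hence al: "allowed n S p" and lp: "length p = Suc m" using u p by (auto simp: A_space_def paths_len_def)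
    have key: "del_at k p \<noteq> q" if k: "k < Suc m" "k \<noteq> j" for k
    proof
      assume d: "del_at k p = q"
      show False
      proof (cases "k < j")
        case True
        have "q!(j-1) = p!j" "q!j = p!Suc j"
          using d j k True lp lq nth_del_at[of k p "j-1"] nth_del_at[of k p j] by auto
        moreover have "arrow n S (p!j) (p!Suc j)" using al lp j unfolding allowed_def by auto
        ultimately show False using na by simp
      next
        case False
        hence "q!(j-1) = p!(j-1)" "q!j = p!j"
          using d j k lp lq nth_del_at[of k p "j-1"] nth_del_at[of k p j] by auto
        moreover obtain i where i: "j = Suc i" using j by (cases j) auto
        moreover have "arrow n S (p!i) (p!Suc i)" using al lp j i unfolding allowed_def by auto
        ultimately show False using na by simp
      qed
    qed
    have "(\<Sum>k<length p. if del_at k p = q then (-1)^k * u p else 0)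
        = (\<Sum>k<Suc m. if k = j then (if del_at j p = q then (-1)^j * u p else 0) else 0)"
      using lp key by (intro sum.cong) auto
    also have "\<dots> = (if del_at j p = q then (-1)^j * u p else 0)" using j by simp
    finally show ?thesis .
  qed
  have eqset: "{p \<in> ?PL. del_at j p = q} = (\<lambda>x. ins j x q) ` {..<n}"
  proof (intro set_eqI iffI)
    fix p assume "p \<in> {p \<in> ?PL. del_at j p = q}"
    hence p: "p \<in> ?PL" "del_at j p = q" by auto
    hence lp: "length p = Suc m" "set p \<subseteq> {0..<n}" by (auto simp: paths_len_def)
    hence "p!j \<in> set p" using j by (intro nth_mem) simp
    hence "p!j < n" using lp by auto
    moreover have "p = ins j (p!j) q" using ins_del_at[of j p] j lp p by auto
    ultimately show "p \<in> (\<lambda>x. ins j x q) ` {..<n}" by blast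
  next
    fix p assume "p \<in> (\<lambda>x. ins j x q) ` {..<n}"
    then obtain x where x: "x < n" "p = ins j x q" by auto
    thus "p \<in> {p \<in> ?PL. del_at j p = q}" using set_ins[of j x q] sq j lq
      by (auto simp: paths_len_def length_ins del_at_ins)
  qed
  have inj: "inj_on (\<lambda>x. ins j x q) {..<n}"
    by (rule inj_onI) (metis nth_ins_j j(2) lq less_imp_le)
  have "boundary n u q = (\<Sum>p\<in>?PL. if del_at j p = q then (-1)^j * u p else 0)"
    unfolding boundary_def using rq lq by (simp add: step1 cong: sum.cong)
  also have "\<dots> = (\<Sum>p\<in>{p \<in> ?PL. del_at j p = q}. (-1)^j * u p)"
    by (rule sum.inter_filter[symmetric, OF finite_paths_len])
  also have "\<dots> = (\<Sum>x<n. (-1)^j * u (ins j x q))"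
    unfolding eqset by (rule sum.reindex_cong[OF inj refl]) simp
  also have "\<dots> = (-1)^j * (\<Sum>x<n. u (ins j x q))" by (simp add: sum_distrib_left)
  finally show ?thesis .
qed

lemma boundary_lin:
  fixes u v :: "nat list \<Rightarrow> 'k::field"
  shows "boundary n (\<lambda>p. c * u p + d * v p) q = c * boundary n u q + d * boundary n v q"
proof -
  have eq: "(if del_at j p = q then (-1)^j * (c * u p + d * v p) else 0) =
     c * (if del_at j p = q then (-1)^j * u p else 0) + d * (if del_at j p = q then (-1)^j * v p else 0)"
    for j p by (simp add: algebra_simps)
  show ?thesis unfolding boundary_def
    by (simp only: eq sum.distrib sum_distrib_left[symmetric]) simp
qed

lemma boundary_zero_fun: "boundary n (\<lambda>p. 0::'k::field) q = 0"
  using boundary_lin[of n 0 "\<lambda>p. 0::'k" 0 "\<lambda>p. 0" q] by simp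

lemma A_add:
  fixes f g :: "nat list \<Rightarrow> 'k::field"
  assumes "f \<in> A_space n S l" "g \<in> A_space n S l" shows "(\<lambda>p. f p + g p) \<in> A_space n S l"
  unfolding A_space_def
proof (intro CollectI allI impI)
  fix p assume "f p + g p \<noteq> 0" hence "f p \<noteq> 0 \<or> g p \<noteq> 0" by auto
  thus "length p = Suc l \<and> allowed n S p \<and> regular p" using assms unfolding A_space_def by blast
qed

lemma Omega_subspace: "module.subspace cscale (Omega n S m :: (nat list \<Rightarrow> 'k::field) set)"
proof -
  interpret M: module "cscale :: 'k \<Rightarrow> (nat list \<Rightarrow> 'k) \<Rightarrow> _" by (rule module_cscale)
  show ?thesis
  proof (rule M.subspaceI)
    show "0 \<in> (Omega n S m :: (nat list \<Rightarrow> 'k) set)"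
      by (auto simp: Omega_def A_space_def zero_fun_def boundary_zero_fun)
  next
    fix u v :: "nat list \<Rightarrow> 'k" assume u: "u \<in> Omega n S m" and v: "v \<in> Omega n S m"
    have b: "boundary n (\<lambda>p. u p + v p) = (\<lambda>q. boundary n u q + boundary n v q)"
      using boundary_lin[of n 1 u 1 v] by (simp add: fun_eq_iff)
    note A = A_add
    have e: "u + v = (\<lambda>p. u p + v p)" by (simp add: fun_eq_iff)
    have "(\<lambda>p. u p + v p) \<in> A_space n S m" using u v A unfolding Omega_def by blast
    moreover have "m = 0 \<or> boundary n (\<lambda>p. u p + v p) \<in> A_space n S (m - 1)"
      using u v A unfolding Omega_def b by blast
    ultimately show "u + v \<in> Omega n S m" unfolding e Omega_def by blast
  next
    fix c :: 'k and u :: "nat list \<Rightarrow> 'k" assume u: "u \<in> Omega n S m"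
    have b: "boundary n (\<lambda>p. c * u p) = (\<lambda>q. c * boundary n u q)"
      using boundary_lin[of n c u 0 u] by (simp add: fun_eq_iff)
    have A: "\<And>f l. f \<in> A_space n S l \<Longrightarrow> (\<lambda>p. c * f p) \<in> A_space n S l"
      unfolding A_space_def by auto
    have e: "cscale c u = (\<lambda>p. c * u p)" by (simp add: cscale_def)
    have "(\<lambda>p. c * u p) \<in> A_space n S m" using u A unfolding Omega_def by blast
    moreover have "m = 0 \<or> boundary n (\<lambda>p. c * u p) \<in> A_space n S (m - 1)"
      using u A unfolding Omega_def b by blast
    ultimately show "cscale c u \<in> Omega n S m" unfolding e Omega_def by blast
  qed
qed

lemma Omega_iff:
  fixes u :: "nat list \<Rightarrow> 'k::field"
  assumes m: "1 \<le> m" and u: "u \<in> A_space n S m"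
  shows "u \<in> Omega n S m \<longleftrightarrow> (\<forall>q j. length q = m \<longrightarrow> regular q \<longrightarrow> set q \<subseteq> {0..<n} \<longrightarrow>
     0 < j \<longrightarrow> j < m \<longrightarrow> \<not> arrow n S (q!(j-1)) (q!j) \<longrightarrow> (\<Sum>x<n. u (ins j x q)) = 0)"
proof
  assume o: "u \<in> Omega n S m"
  show "\<forall>q j. length q = m \<longrightarrow> regular q \<longrightarrow> set q \<subseteq> {0..<n} \<longrightarrow>
     0 < j \<longrightarrow> j < m \<longrightarrow> \<not> arrow n S (q!(j-1)) (q!j) \<longrightarrow> (\<Sum>x<n. u (ins j x q)) = 0"
  proof (intro allI impI)
    fix q j assume q: "length q = m" "regular q" "set q \<subseteq> {0..<n}" "0 < j" "j < m"
      "\<not> arrow n S (q!(j-1)) (q!j)"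
    have "\<not> allowed n S q"
    proof
      assume "allowed n S q"
      moreover obtain i where i: "j = Suc i" using q by (cases j) auto
      ultimately have "arrow n S (q!i) (q!Suc i)" using q unfolding allowed_def by auto
      thus False using q i by simp
    qed
    hence "boundary n u q = 0" using o m unfolding Omega_def A_space_def by auto
    thus "(\<Sum>x<n. u (ins j x q)) = 0" using face[OF u q] by simp
  qed
next
  assume H: "\<forall>q j. length q = m \<longrightarrow> regular q \<longrightarrow> set q \<subseteq> {0..<n} \<longrightarrow>
     0 < j \<longrightarrow> j < m \<longrightarrow> \<not> arrow n S (q!(j-1)) (q!j) \<longrightarrow> (\<Sum>x<n. u (ins j x q)) = 0"
  have "boundary n u \<in> A_space n S (m - 1)"
    unfolding A_space_def
  proof (intro CollectI allI impI)
    fix q assume nz: "boundary n u q \<noteq> 0"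
    hence rq: "regular q" unfolding boundary_def by (auto split: if_splits)
    have lq: "length q = m"
    proof (rule ccontr)
      assume "length q \<noteq> m"
      hence "\<forall>p\<in>paths_len n (Suc (length q)). u p = 0" using u
        by (auto simp: paths_len_def A_space_def)
      hence "boundary n u q = 0" unfolding boundary_def by (simp add: sum.neutral)
      thus False using nz by simp
    qed
    have sq: "set q \<subseteq> {0..<n}"
    proof (rule ccontr)
      assume ns: "\<not> set q \<subseteq> {0..<n}"
      have "\<forall>p\<in>paths_len n (Suc (length q)). \<forall>k. del_at k p \<noteq> q"
        using set_del_at ns by (fastforce simp: paths_len_def)
      hence "boundary n u q = 0" unfolding boundary_def by (simp add: sum.neutral)
      thus False using nz by simp
    qed
    have al: "allowed n S q"
    proof (rule ccontr)
      assume "\<not> allowed n S q"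
      then obtain i where i: "Suc i < length q" "\<not> arrow n S (q!i) (q!Suc i)"
        using sq unfolding allowed_def by auto
      have "boundary n u q = (-1)^(Suc i) * (\<Sum>x<n. u (ins (Suc i) x q))"
        by (rule face[OF u lq rq sq]) (use i lq in auto)
      also have "\<dots> = 0" using H lq rq sq i by fastforce
      finally show False using nz by simp
    qed
    show "length q = Suc (m - 1) \<and> allowed n S q \<and> regular q" using lq al rq m by simp
  qed
  thus "u \<in> Omega n S m" using u by (simp add: Omega_def)
qed

definition ps :: "(nat \<Rightarrow> nat) \<Rightarrow> nat \<Rightarrow> nat" where "ps w k = (\<Sum>i<k. w i)"

definition P :: "nat \<Rightarrow> nat \<Rightarrow> nat \<Rightarrow> (nat \<Rightarrow> nat) \<Rightarrow> nat list" where
  "P n m a w = map (\<lambda>k. (a + ps w k) mod n) [0..<Suc m]"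

definition swp :: "nat \<Rightarrow> (nat \<Rightarrow> nat) \<Rightarrow> nat \<Rightarrow> nat" where
  "swp i w = w(i := w (Suc i), Suc i := w i)"

lemma ps_0[simp]: "ps w 0 = 0" by (simp add: ps_def)
lemma ps_Suc[simp]: "ps w (Suc k) = ps w k + w k" by (simp add: ps_def)

lemma length_P[simp]: "length (P n m a w) = Suc m" by (simp add: P_def)

lemma nth_P: "k \<le> m \<Longrightarrow> P n m a w ! k = (a + ps w k) mod n"
  by (simp add: P_def nth_map_upt del: upt_Suc)

lemma P_Suc: "k < m \<Longrightarrow> P n m a w ! Suc k = (P n m a w ! k + w k) mod n"
  by (simp add: nth_P mod_add_left_eq add.assoc)

lemma set_P: "0 < n \<Longrightarrow> set (P n m a w) \<subseteq> {0..<n}"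
  by (auto simp: P_def)

lemma P_cong: "(\<And>i. i < m \<Longrightarrow> w i = w' i) \<Longrightarrow> P n m a w = P n m a w'"
proof -
  assume h: "\<And>i. i < m \<Longrightarrow> w i = w' i"
  have "ps w k = ps w' k" if "k \<le> m" for k using that h by (induct k) auto
  thus ?thesis by (simp add: P_def)
qed

lemma modcancel:
  fixes y d t n :: nat
  assumes "(y + d) mod n = (y + t) mod n" "d < n" "t < n"
  shows "d = t"
proof -
  have "d mod n = t mod n" using assms(1) cong_add_lcancel_nat[of y d t n] unfolding cong_def by simp
  thus ?thesis using assms by simp
qed

lemma mod_add_self_neq: "(x + d) mod n \<noteq> x" if "(x::nat) < n" "0 < d" "d < n"
proof
  assume "(x + d) mod n = x"
  hence "(x + d) mod n = (x + 0) mod n" using that by simp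
  thus False using modcancel[of x d n 0] that by simp
qed

lemma regular_P:
  assumes "\<And>i. i < m \<Longrightarrow> 0 < w i \<and> w i < n"
  shows "regular (P n m a w)"
  unfolding regular_def
proof (intro allI impI)
  fix i assume "Suc i < length (P n m a w)"
  hence i: "i < m" by simp
  have n: "0 < n" using assms[OF i] by auto
  have "P n m a w ! i < n" using n i by (simp add: nth_P)
  thus "P n m a w ! i \<noteq> P n m a w ! Suc i"
    using P_Suc[OF i] mod_add_self_neq[of "P n m a w ! i" n "w i"] assms[OF i] by auto
qed

lemma arrow_mod:
  assumes "x < n" "d < n" "\<And>t. t \<in> S \<Longrightarrow> t < n"
  shows "arrow n S x ((x + d) mod n) \<longleftrightarrow> d \<in> S"
proof
  assume "arrow n S x ((x + d) mod n)"
  then obtain t where t: "t \<in> S" "(x + d) mod n = (x + t) mod n" unfolding arrow_def by auto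
  hence "d = t" using modcancel[OF t(2)] assms by auto
  thus "d \<in> S" using t by simp
next
  assume "d \<in> S" thus "arrow n S x ((x + d) mod n)" using assms(1) unfolding arrow_def by auto
qed

lemma allowed_P:
  assumes "0 < n" "\<And>t. t \<in> S \<Longrightarrow> t < n" "\<And>i. i < m \<Longrightarrow> w i < n"
  shows "allowed n S (P n m a w) \<longleftrightarrow> (\<forall>i<m. w i \<in> S)"
proof -
  have "arrow n S (P n m a w ! i) (P n m a w ! Suc i) \<longleftrightarrow> w i \<in> S" if i: "i < m" for i
  proof -
    have "P n m a w ! i < n" using i assms(1) by (simp add: nth_P)
    thus ?thesis unfolding P_Suc[OF i] using arrow_mod[OF _ assms(3)[OF i], of _ S] assms(2) by blast
  qed
  thus ?thesis using set_P[OF assms(1)] unfolding allowed_def by auto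
qed

lemma P_inj:
  assumes "a < n" "a' < n" "\<And>i. i < m \<Longrightarrow> w i < n \<and> w' i < n"
    and eq: "P n m a w = P n m a' w'"
  shows "a = a' \<and> (\<forall>i<m. w i = w' i)"
proof
  have "P n m a w ! 0 = P n m a' w' ! 0" using eq by simp
  thus "a = a'" using assms(1,2) by (simp add: nth_P)
  show "\<forall>i<m. w i = w' i"
  proof (intro allI impI)
    fix i assume i: "i < m"
    have "(P n m a w ! i + w i) mod n = (P n m a w ! i + w' i) mod n"
      using P_Suc[OF i, of n a w] P_Suc[OF i, of n a' w'] eq by simp
    thus "w i = w' i" using modcancel assms(3)[OF i] by blast
  qed
qed

lemma epath_P:
  assumes "a < n" "a' < n" "\<And>i. i < m \<Longrightarrow> 0 < w i \<and> w i < n \<and> w' i < n"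
  shows "(epath (P n m a w) (P n m a' w') :: 'k::field) = (if a = a' \<and> (\<forall>i<m. w i = w' i) then 1 else 0)"
proof -
  have r: "regular (P n m a w)" using assms by (intro regular_P) auto
  have "P n m a w = P n m a' w' \<longleftrightarrow> a = a' \<and> (\<forall>i<m. w i = w' i)"
  proof
    assume "P n m a w = P n m a' w'"
    thus "a = a' \<and> (\<forall>i<m. w i = w' i)" using P_inj[of a n a' m w w'] assms by blast
  next
    assume "a = a' \<and> (\<forall>i<m. w i = w' i)"
    thus "P n m a w = P n m a' w'" using P_cong[of m w w' n a] by blast
  qed
  thus ?thesis using r by (auto simp: epath_def)
qed

lemma allowed_is_P:
  assumes n: "0 < n" and S: "\<And>t. t \<in> S \<Longrightarrow> t < n"
    and al: "allowed n S p" and lp: "length p = Suc m"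
  shows "\<exists>w. (\<forall>i<m. w i \<in> S) \<and> p = P n m (p!0) w \<and> p!0 < n"
proof -
  define w where "w i = (SOME t. t \<in> S \<and> p!Suc i = (p!i + t) mod n)" for i
  have ex: "\<exists>t. t \<in> S \<and> p!Suc i = (p!i + t) mod n" if "i < m" for i
    using al that lp unfolding allowed_def arrow_def by auto
  have w: "w i \<in> S \<and> p!Suc i = (p!i + w i) mod n" if "i < m" for i
    unfolding w_def using someI_ex[OF ex[OF that]] .
  have "p!0 \<in> set p" using lp by simp
  hence p0: "p!0 < n" using al unfolding allowed_def by auto
  have pk: "p!k = (p!0 + ps w k) mod n" if "k \<le> m" for k
    using that
  proof (induct k)
    case 0 thus ?case using p0 by simp
  next
    case (Suc k)
    have k: "k < m" "k \<le> m" using Suc.prems by auto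
    have ih: "p!k = (p!0 + ps w k) mod n" using Suc.hyps k(2) .
    have "p!Suc k = (p!k + w k) mod n" using w[OF k(1)] by blast
    also have "\<dots> = ((p!0 + ps w k) mod n + w k) mod n" by (subst ih) (rule refl)
    also have "\<dots> = (p!0 + ps w (Suc k)) mod n" by (simp add: mod_add_left_eq add.assoc)
    finally show ?case .
  qed
  have "p = P n m (p!0) w"
  proof (rule nth_equalityI)
    show "length p = length (P n m (p!0) w)" using lp by simp
    fix k assume "k < length p"
    hence "k \<le> m" using lp by simp
    thus "p!k = P n m (p!0) w ! k" using pk[of k] by (simp only: nth_P)
  qed
  thus ?thesis using w p0 by blast
qed

lemma swp1: "swp i w i = w (Suc i)" by (simp add: swp_def)
lemma swp2: "swp i w (Suc i) = w i" by (simp add: swp_def)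
lemma swp3: "k \<noteq> i \<Longrightarrow> k \<noteq> Suc i \<Longrightarrow> swp i w k = w k" by (simp add: swp_def)
lemma ps_swp_aux: "ps (swp i w) k = (if k = Suc i then ps w i + w (Suc i) else ps w k)"
  proof (induct k)
    case 0 thus ?case by simp
  next
    case (Suc k)
    have e: "ps (swp i w) (Suc k) = ps (swp i w) k + swp i w k" by simp
    consider "k = i" | "k = Suc i" | "k \<noteq> i \<and> k \<noteq> Suc i" by blast
    thus ?case
    proof cases
      case 1 thus ?thesis using Suc unfolding e by (simp add: swp1)
    next
      case 2 thus ?thesis using Suc unfolding e by (simp add: swp2)
    next
      case 3 thus ?thesis using Suc unfolding e by (simp add: swp3)
    qed
  qed

lemma ps_swp:
  assumes "0 < j"
  shows "ps (swp (j-1) w) k = (if k = j then ps w (j-1) + w j else ps w k)"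
proof -
  obtain i where i: "j = Suc i" using assms by (cases j) auto
  show ?thesis using i ps_swp_aux[of i w k] by simp
qed

lemma NC:
  fixes u :: "nat list \<Rightarrow> 'k::field"
  assumes s: "1 < s" "2 * s < n" and u: "u \<in> Omega n {1, s} m" and a: "a < n"
    and w: "\<forall>i<m. w i \<in> {1, s}" and i: "Suc i < m" and nd: "w i + w (Suc i) \<notin> {1, s}"
  shows "u (P n m a w) + (if w i = w (Suc i) then 0 else u (P n m a (swp i w))) = 0"
proof -
  let ?S = "{1, s}"
  define p where "p = P n m a w"
  define q where "q = del_at (Suc i) p"
  define d where "d = w i + w (Suc i)"
  have n: "0 < n" using s by simp
  have Sn: "\<And>t. t \<in> ?S \<Longrightarrow> t < n" using s by auto
  have wi: "w i \<in> ?S" "w (Suc i) \<in> ?S" using w i by auto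
  have dn: "0 < d" "d < n" using wi s by (auto simp: d_def)
  have uA: "u \<in> A_space n ?S m" using u by (simp add: Omega_def)
  have m1: "1 \<le> m" using i by simp
  have lp: "length p = Suc m" by (simp add: p_def)
  have wn: "\<And>k. k < m \<Longrightarrow> 0 < w k \<and> w k < n" using w s by fastforce
  have rp: "regular p" unfolding p_def by (rule regular_P) (use wn in auto)
  have pi: "p!i < n" using n i by (simp add: p_def nth_P)
  have pSi: "p!Suc i = (p!i + w i) mod n" unfolding p_def by (rule P_Suc) (use i in simp)
  have pSSi: "p!Suc (Suc i) = (p!i + d) mod n"
    unfolding p_def P_Suc[OF i] by (simp add: p_def[symmetric] pSi mod_add_left_eq d_def add.assoc)
  have lq: "length q = m" using lp i by (simp add: q_def length_del_at)
  have sq: "set q \<subseteq> {0..<n}" using set_del_at[of "Suc i" p] set_P[OF n, of m a w]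
    by (auto simp: q_def p_def)
  have qnth: "q!k = (if k < Suc i then p!k else p!Suc k)" if "k < m" for k
    unfolding q_def using nth_del_at[of "Suc i" p k] that lp i by simp
  have rq: "regular q" unfolding regular_def
  proof (intro allI impI)
    fix k assume k: "Suc k < length q"
    have rpk: "p!k' \<noteq> p!Suc k'" if "Suc k' < Suc m" for k' using rp lp that unfolding regular_def by auto
    consider "Suc k < Suc i" | "k = i" | "Suc i \<le> k" by linarith
    thus "q!k \<noteq> q!Suc k"
    proof cases
      case 1 thus ?thesis using qnth[of k] qnth[of "Suc k"] k lq rpk[of k] by auto
    next
      case 2 thus ?thesis using qnth[of k] qnth[of "Suc k"] k lq pSSi
          mod_add_self_neq[OF pi dn] by auto
    next
      case 3 thus ?thesis using qnth[of k] qnth[of "Suc k"] k lq rpk[of "Suc k"] by auto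
    qed
  qed
  have qi: "q!i = p!i" "q!Suc i = p!Suc (Suc i)" using qnth[of i] qnth[of "Suc i"] i by auto
  have na: "\<not> arrow n ?S (q!(Suc i - 1)) (q!Suc i)"
  proof -
    have "arrow n ?S (p!i) ((p!i + d) mod n) \<longleftrightarrow> d \<in> ?S"
      by (rule arrow_mod[OF pi dn(2)]) (rule Sn)
    thus ?thesis using nd qi pSSi unfolding d_def by simp
  qed
  have sum0: "(\<Sum>x<n. u (ins (Suc i) x q)) = 0"
    using iffD1[OF Omega_iff[OF m1 uA] u] lq rq sq i na by blast
  have insq: "ins (Suc i) x q = p[Suc i := x]" for x
    unfolding q_def using ins_del_at_upd[of "Suc i" p x] lp i by simp
  define y where "y = (p!i + w (Suc i)) mod n"
  have M: "x = p!Suc i \<or> x = y" if x: "x < n" "u (p[Suc i := x]) \<noteq> 0" for x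
  proof -
    have al: "allowed n ?S (p[Suc i := x])" using uA x(2) by (auto simp: A_space_def)
    have "arrow n ?S (p[Suc i := x] ! i) (p[Suc i := x] ! Suc i)"
      "arrow n ?S (p[Suc i := x] ! Suc i) (p[Suc i := x] ! Suc (Suc i))"
    proof -
      have "\<forall>k<m. arrow n ?S (p[Suc i := x] ! k) (p[Suc i := x] ! Suc k)"
        using al lp unfolding allowed_def by simp
      thus "arrow n ?S (p[Suc i := x] ! i) (p[Suc i := x] ! Suc i)"
        "arrow n ?S (p[Suc i := x] ! Suc i) (p[Suc i := x] ! Suc (Suc i))"
        using i Suc_lessD[OF i] by blast+
    qed
    hence a1: "arrow n ?S (p!i) x" and a2: "arrow n ?S x (p!Suc (Suc i))" using lp i by auto
    obtain t1 where t1: "t1 \<in> ?S" "x = (p!i + t1) mod n" using a1 unfolding arrow_def by blast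
    obtain t2 where t2: "t2 \<in> ?S" "p!Suc (Suc i) = (x + t2) mod n" using a2 unfolding arrow_def by blast
    have "(p!i + (t1 + t2)) mod n = (p!i + d) mod n"
      using t1(2) t2(2) pSSi by (simp add: mod_add_left_eq add.assoc)
    moreover have "t1 + t2 < n" using t1(1) t2(1) s by auto
    ultimately have "t1 + t2 = d" using modcancel dn(2) by blast
    hence "t1 = w i \<or> t1 = w (Suc i)" using t1(1) t2(1) wi s unfolding d_def by auto
    thus ?thesis using t1(2) pSi y_def by auto
  qed
  have yP: "p[Suc i := y] = P n m a (swp i w)"
  proof (rule nth_equalityI)
    show "length (p[Suc i := y]) = length (P n m a (swp i w))" using lp by simp
    fix k assume k: "k < length (p[Suc i := y])"
    hence km: "k \<le> m" using lp by simp
    show "p[Suc i := y] ! k = P n m a (swp i w) ! k"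
    proof (cases "k = Suc i")
      case True
      have "P n m a (swp i w) ! k = (a + (ps w i + w (Suc i))) mod n"
        using km True by (simp add: nth_P ps_swp_aux swp1)
      also have "\<dots> = y" using i by (simp add: y_def p_def nth_P mod_add_left_eq add.assoc)
      finally show ?thesis using True lp i by simp
    next
      case False
      thus ?thesis using km by (simp add: p_def nth_P ps_swp_aux)
    qed
  qed
  show ?thesis
  proof (cases "w i = w (Suc i)")
    case True
    have "(\<Sum>x<n. u (p[Suc i := x])) = (\<Sum>x\<in>{p!Suc i}. u (p[Suc i := x]))"
    proof (rule sum.mono_neutral_right)
      show "{p!Suc i} \<subseteq> {..<n}" using pSi n by simp
      show "\<forall>x\<in>{..<n} - {p!Suc i}. u (p[Suc i := x]) = 0" using M True pSi y_def by auto
    qed simp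
    hence "u p = 0" using sum0 insq by simp
    thus ?thesis using True by (simp add: p_def)
  next
    case False
    have yne: "y \<noteq> p!Suc i"
      using modcancel[of "p!i" "w (Suc i)" n "w i"] False wn i pSi y_def by auto
    have "(\<Sum>x<n. u (p[Suc i := x])) = (\<Sum>x\<in>{p!Suc i, y}. u (p[Suc i := x]))"
    proof (rule sum.mono_neutral_right)
      show "{p!Suc i, y} \<subseteq> {..<n}" using pSi n y_def by simp
      show "\<forall>x\<in>{..<n} - {p!Suc i, y}. u (p[Suc i := x]) = 0" using M by auto
    qed simp
    hence "u p + u (p[Suc i := y]) = 0" using sum0 insq yne by simp
    thus ?thesis using False yP by (simp add: p_def)
  qed
qed

lemma epath_A:
  "allowed n S R \<Longrightarrow> regular R \<Longrightarrow> length R = Suc m \<Longrightarrow> (epath R :: _ \<Rightarrow> 'k::field) \<in> A_space n S m"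
  by (auto simp: A_space_def epath_def)

lemma A_lincomb:
  fixes f :: "'j \<Rightarrow> nat list \<Rightarrow> 'k::field"
  assumes "\<And>j. j \<in> J \<Longrightarrow> f j \<in> A_space n S m"
  shows "(\<lambda>q. \<Sum>j\<in>J. c j * f j q) \<in> A_space n S m"
  unfolding A_space_def
proof (intro CollectI allI impI)
  fix q assume "(\<Sum>j\<in>J. c j * f j q) \<noteq> 0"
  then obtain j where "j \<in> J" "c j * f j q \<noteq> 0" by (meson sum.neutral)
  thus "length q = Suc m \<and> allowed n S q \<and> regular q" using assms unfolding A_space_def by auto
qed

lemma sum_epath_ins:
  assumes "regular R" "j < length R" "R!j < n" "length q = length R - 1"
  shows "(\<Sum>x<n. (epath R (ins j x q) :: 'k::field)) = (if del_at j R = q then 1 else 0)"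
proof -
  have e: "ins j x q = R \<longleftrightarrow> x = R!j \<and> del_at j R = q" for x
  proof
    assume h: "ins j x q = R"
    have "x = R!j" using h nth_ins_j[of j q x] assms by auto
    moreover have "del_at j R = q" using h del_at_ins[of j q x] assms by auto
    ultimately show "x = R!j \<and> del_at j R = q" by simp
  next
    assume "x = R!j \<and> del_at j R = q"
    thus "ins j x q = R" using ins_del_at[of j R] assms by auto
  qed
  have "(\<Sum>x<n. (epath R (ins j x q) :: 'k)) = (\<Sum>x<n. if x = R!j then (if del_at j R = q then 1 else 0) else 0)"
    using assms(1) by (intro sum.cong) (auto simp: epath_def e)
  also have "\<dots> = (if del_at j R = q then 1 else 0)" using assms(3) by simp
  finally show ?thesis .
qed

lemma del_at_cong:
  assumes "length p = length p'" "j < length p" "\<And>k. k < length p \<Longrightarrow> k \<noteq> j \<Longrightarrow> p!k = p'!k"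
  shows "del_at j p = del_at j p'"
proof (rule nth_equalityI)
  show "length (del_at j p) = length (del_at j p')" using assms by (simp add: length_del_at)
  fix k assume "k < length (del_at j p)"
  hence k: "k < length p - 1" using assms by (simp add: length_del_at)
  show "del_at j p ! k = del_at j p' ! k"
    using nth_del_at[OF assms(2) k] nth_del_at[of j p' k] assms k by auto
qed

lemma del_P_nth:
  assumes "Suc i < m"
  shows "del_at (Suc i) (P n m a w) ! i = P n m a w ! i"
    "del_at (Suc i) (P n m a w) ! Suc i = (P n m a w ! i + (w i + w (Suc i))) mod n"
proof -
  have l: "Suc i < length (P n m a w)" using assms by simp
  show "del_at (Suc i) (P n m a w) ! i = P n m a w ! i" using nth_del_at[OF l, of i] assms by simp
  have "del_at (Suc i) (P n m a w) ! Suc i = P n m a w ! Suc (Suc i)"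
    using nth_del_at[OF l, of "Suc i"] assms by simp
  also have "\<dots> = (P n m a w ! i + (w i + w (Suc i))) mod n"
    using assms by (simp add: P_Suc mod_add_left_eq add.assoc)
  finally show "del_at (Suc i) (P n m a w) ! Suc i = (P n m a w ! i + (w i + w (Suc i))) mod n" .
qed

lemma del_P_arrow:
  assumes "0 < n" "\<And>t. t \<in> S \<Longrightarrow> t < n" "w i + w (Suc i) < n" "Suc i < m"
    and "del_at (Suc i) (P n m a w) = q"
  shows "arrow n S (q!i) (q!Suc i) \<longleftrightarrow> w i + w (Suc i) \<in> S"
proof -
  have "P n m a w ! i < n" using assms by (simp add: nth_P)
  from arrow_mod[OF this assms(3) assms(2)] show ?thesis
    using del_P_nth[OF assms(4), of n a w] assms(5) by simp
qed

lemma sumS: "t1 \<in> {1, s} \<Longrightarrow> t2 \<in> {1, s} \<Longrightarrow> 1 < (s::nat) \<Longrightarrow>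
  (t1 + t2 \<in> {1, s} \<longleftrightarrow> s = 2 \<and> t1 = 1 \<and> t2 = 1)"
  by auto

abbreviation "g1 s \<equiv> (\<lambda>i::nat. if i = 0 then 1 else s)"
abbreviation "g2 s \<equiv> (\<lambda>i::nat. if i = 0 then s else 1)"

lemma P2: "P n 2 a w = [a mod n, (a + w 0) mod n, (a + (w 0 + w 1)) mod n]"
  by (simp add: P_def numeral_2_eq_2 upt_rec)

lemma gamma_eq:
  "a < n \<Longrightarrow> (gamma n s a :: nat list \<Rightarrow> 'k::field) =
     (\<lambda>q. epath (P n 2 a (g1 s)) q - epath (P n 2 a (g2 s)) q)"
  by (simp add: gamma_def P2 add.assoc add.commute)

lemma A_diff:
  fixes f g :: "nat list \<Rightarrow> 'k::field"
  assumes "f \<in> A_space n S l" "g \<in> A_space n S l" shows "(\<lambda>p. f p - g p) \<in> A_space n S l"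
  unfolding A_space_def
proof (intro CollectI allI impI)
  fix p assume "f p - g p \<noteq> 0" hence "f p \<noteq> 0 \<or> g p \<noteq> 0" by auto
  thus "length p = Suc l \<and> allowed n S p \<and> regular p" using assms unfolding A_space_def by blast
qed

lemma swp_in: "(\<forall>k<m. w k \<in> S) \<Longrightarrow> Suc i < m \<Longrightarrow> (\<forall>k<m. swp i w k \<in> S)"
  by (auto simp: swp_def)

lemma nonzero_is_P:
  fixes u :: "nat list \<Rightarrow> 'k::field"
  assumes s: "1 < s" "2 * s < n" and u: "u \<in> Omega n {1, s} m" and nz: "u p \<noteq> 0"
  shows "\<exists>a w. a < n \<and> (\<forall>i<m. w i \<in> {1, s}) \<and> p = P n m a w"
proof -
  have "length p = Suc m" "allowed n {1, s} p" using u nz by (auto simp: Omega_def A_space_def)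
  moreover have "0 < n" using s by simp
  moreover have "\<And>t. t \<in> {1, s} \<Longrightarrow> t < n" using s by auto
  ultimately obtain w where "\<forall>i<m. w i \<in> {1, s}" "p = P n m (p!0) w" "p!0 < n"
    using allowed_is_P[of n "{1, s}" p m] by blast
  thus ?thesis by blast
qed

lemma part2_zero:
  fixes u :: "nat list \<Rightarrow> 'k::field"
  assumes s: "1 < s" "2 * s < n" "s \<noteq> 2" and m: "3 \<le> m" and u: "u \<in> Omega n {1, s} m"
  shows "u = (\<lambda>_. 0)"
proof
  fix p show "u p = 0"
  proof (rule ccontr)
    assume nz: "u p \<noteq> 0"
    then obtain a w where a: "a < n" and w: "\<forall>i<m. w i \<in> {1, s}" and p: "p = P n m a w"
      using nonzero_is_P[OF s(1,2) u] by blast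
    have nd: "w' i + w' (Suc i) \<notin> {1, s}" if "\<forall>i<m. w' i \<in> {1, s}" "Suc i < m" for w' i
    proof -
      have "w' i \<in> {1,s}" "w' (Suc i) \<in> {1,s}" using that by auto
      thus ?thesis using sumS[of "w' i" s "w' (Suc i)"] s(1,3) by simp
    qed
    have i0: "Suc 0 < m" and i1: "Suc 1 < m" using m by auto
    have w012: "w 0 \<in> {1,s}" "w 1 \<in> {1,s}" "w 2 \<in> {1,s}" using w m by auto
    have N0: "u (P n m a w) + (if w 0 = w (Suc 0) then 0 else u (P n m a (swp 0 w))) = 0"
      using NC[OF s(1,2) u a w i0 nd[OF w i0]] .
    have N1: "u (P n m a w) + (if w 1 = w (Suc 1) then 0 else u (P n m a (swp 1 w))) = 0"
      using NC[OF s(1,2) u a w i1 nd[OF w i1]] .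
    have "u (P n m a w) = 0"
    proof (cases "w 0 = w 1")
      case True
      thus ?thesis using N0 by simp
    next
      case F1: False
      show ?thesis
      proof (cases "w 1 = w 2")
        case True
        thus ?thesis using N1 by (simp add: numeral_2_eq_2)
      next
        case False
        have w02: "w 0 = w 2" using F1 False w012 by auto
        have sw: "\<forall>k<m. swp 0 w k \<in> {1, s}" using swp_in[OF w i0] .
        have e: "swp 0 w 1 = swp 0 w (Suc 1)" using w02 by (simp add: swp_def numeral_2_eq_2)
        have z: "u (P n m a (swp 0 w)) = 0"
          using NC[OF s(1,2) u a sw i1 nd[OF sw i1]] e by simp
        show ?thesis using N0 F1 z by simp
      qed
    qed
    thus False using nz p by simp
  qed
qed

lemma part2_basis:
  assumes s: "1 < s" "2 * s < n" "s \<noteq> 2"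
  shows "is_basis (gamma n s ` {0..<n} :: (nat list \<Rightarrow> 'k::field) set) (Omega n {1, s} 2)
     \<and> card (gamma n s ` {0..<n} :: (nat list \<Rightarrow> 'k) set) = n"
proof -
  have n: "0 < n" using s by simp
  have Sn: "\<And>t. t \<in> {1, s} \<Longrightarrow> t < n" using s by auto
  have gb: "\<And>i. i < 2 \<Longrightarrow> 0 < g1 s i \<and> g1 s i < n \<and> g2 s i < n \<and> 0 < g2 s i" using s by auto
  have ep: "(epath (P n 2 a w) (P n 2 b w') :: 'k) = (if a = b \<and> (\<forall>i<2. w i = w' i) then 1 else 0)"
    if "a < n" "b < n" "w = g1 s \<or> w = g2 s" "w' = g1 s \<or> w' = g2 s" for a b w w'
    by (rule epath_P) (use that gb in auto)
  have d12: "\<not> (\<forall>i<2. g2 s i = g1 s i)" "\<not> (\<forall>i<2. g1 s i = g2 s i)" using s by auto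
  have d11: "\<forall>i<2. g1 s i = g1 s i" by simp
  have gam: "gamma n s a (P n 2 b (g1 s)) = (if a = b then 1 else (0::'k))" if "a < n" "b < n" for a b
    using that d12 by (simp add: gamma_eq ep)
  have reg: "regular (P n 2 a w)" if "w = g1 s \<or> w = g2 s" for a w
    by (rule regular_P) (use that gb in auto)
  have alw: "allowed n {1, s} (P n 2 a w)" if "w = g1 s \<or> w = g2 s" for a w
    using allowed_P[of n "{1, s}" 2 w a] n Sn that gb by auto
  have inV: "(gamma n s a :: nat list \<Rightarrow> 'k) \<in> Omega n {1, s} 2" if a: "a < n" for a
  proof -
    have A: "(gamma n s a :: nat list \<Rightarrow> 'k) \<in> A_space n {1, s} 2"
      unfolding gamma_eq[OF a] by (intro A_diff epath_A alw reg) auto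
    have m1: "1 \<le> (2::nat)" by simp
    show ?thesis unfolding Omega_iff[OF m1 A]
    proof (intro allI impI)
      fix q :: "nat list" and j :: nat
      assume q: "length q = 2" "0 < j" "j < 2"
      hence j: "j = 1" by simp
      have pn: "P n 2 a w ! 1 < n" for w using n by (simp add: nth_P)
      have "(\<Sum>x<n. (gamma n s a (ins j x q) :: 'k)) =
          (\<Sum>x<n. (epath (P n 2 a (g1 s)) (ins 1 x q) :: 'k)) - (\<Sum>x<n. epath (P n 2 a (g2 s)) (ins 1 x q))"
        unfolding gamma_eq[OF a] j by (simp add: sum_subtractf)
      also have "\<dots> = (if del_at 1 (P n 2 a (g1 s)) = q then 1 else 0) - (if del_at 1 (P n 2 a (g2 s)) = q then 1 else 0)"
        using q pn reg by (simp add: sum_epath_ins)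
      also have "\<dots> = 0" by (simp add: P2 del_at_def add.commute)
      finally show "(\<Sum>x<n. (gamma n s a (ins j x q) :: 'k)) = 0" .
    qed
  qed
  have van: "v = 0" if v: "v \<in> Omega n {1, s} 2" and z: "\<And>a. a \<in> {0..<n} \<Longrightarrow> v (P n 2 a (g1 s)) = 0"
    for v :: "nat list \<Rightarrow> 'k"
  proof
    fix p show "v p = 0 p"
    proof (rule ccontr)
      assume "v p \<noteq> 0 p"
      hence nz: "v p \<noteq> 0" by simp
      then obtain a w where a: "a < n" and w: "\<forall>i<2. w i \<in> {1, s}" and p: "p = P n 2 a w"
        using nonzero_is_P[OF s(1,2) v] by blast
      have i0: "Suc 0 < 2" by simp
      have wi: "w 0 \<in> {1,s}" "w 1 \<in> {1,s}" using w by auto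
      have nd: "w 0 + w (Suc 0) \<notin> {1, s}" using sumS[OF wi] s by simp
      have N0: "v (P n 2 a w) + (if w 0 = w (Suc 0) then 0 else v (P n 2 a (swp 0 w))) = 0"
        using NC[OF s(1,2) v a w i0 nd] .
      have "v (P n 2 a w) = 0"
      proof (cases "w 0 = w 1")
        case True thus ?thesis using N0 by simp
      next
        case False
        show ?thesis
        proof (cases "w 0 = 1")
          case True
          hence "w 1 = s" using False wi by auto
          hence "P n 2 a w = P n 2 a (g1 s)" using True by (intro P_cong) (auto simp: less_2_cases_iff)
          thus ?thesis using z a by simp
        next
          case F2: False
          hence "w 0 = s" "w 1 = 1" using False wi by auto
          hence "P n 2 a (swp 0 w) = P n 2 a (g1 s)"
            by (intro P_cong) (auto simp: less_2_cases_iff swp_def)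
          thus ?thesis using z a N0 False by simp
        qed
      qed
      thus False using nz p by simp
    qed
  qed
  have "is_basis (gamma n s ` {0..<n} :: (nat list \<Rightarrow> 'k) set) (Omega n {1, s} 2)
     \<and> card (gamma n s ` {0..<n} :: (nat list \<Rightarrow> 'k) set) = card {0..<n}"
  proof (rule basis_crit[where pt = "\<lambda>a. P n 2 a (g1 s)"])
    show "finite {0..<n}" by simp
    show "\<And>i. i \<in> {0..<n} \<Longrightarrow> (gamma n s i :: nat list \<Rightarrow> 'k) (P n 2 i (g1 s)) \<noteq> 0"
      using gam by simp
    show "\<And>i j. i \<in> {0..<n} \<Longrightarrow> j \<in> {0..<n} \<Longrightarrow> j \<noteq> i \<Longrightarrow>
        (gamma n s j :: nat list \<Rightarrow> 'k) (P n 2 i (g1 s)) = 0"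
      using gam by simp
    show "\<And>i. i \<in> {0..<n} \<Longrightarrow> (gamma n s i :: nat list \<Rightarrow> 'k) \<in> Omega n {1, s} 2"
      using inV by simp
    show "module.subspace cscale (Omega n {1, s} 2 :: (nat list \<Rightarrow> 'k) set)"
      by (rule Omega_subspace)
    fix v :: "nat list \<Rightarrow> 'k" assume v1: "v \<in> Omega n {1, s} 2" and v2: "\<And>i. i \<in> {0..<n} \<Longrightarrow> v (P n 2 i (g1 s)) = 0"
    show "v = 0" using van[OF v1 v2] .
  qed
  thus ?thesis by simp
qed

definition ek :: "nat \<Rightarrow> nat \<Rightarrow> nat" where "ek k = (\<lambda>i. if i = k then 2 else 1)"

lemma ps_one: "ps (\<lambda>_. 1) k = k" by (induct k) auto
lemma ps_one': "ps (\<lambda>_. Suc 0) k = k" by (induct k) auto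

lemma ps_ek: "ps (ek k) i = (if i \<le> k then i else Suc i)"
  by (induct i) (auto simp: ek_def)

lemma alpha_eq: "alpha n m a = epath (P n m a (\<lambda>_. 1))"
  unfolding alpha_def P_def by (simp add: ps_one ps_one' del: upt_Suc)

lemma beta_path:
  assumes "1 \<le> j" "j \<le> m"
  shows "map (\<lambda>i. (a + i) mod n) ([0..<j] @ [Suc j..<m+2]) = P n m a (ek (j-1))"
proof (rule nth_equalityI)
  show "length (map (\<lambda>i. (a + i) mod n) ([0..<j] @ [Suc j..<m+2])) = length (P n m a (ek (j-1)))"
    using assms by (simp del: upt_Suc)
  fix i assume "i < length (map (\<lambda>i. (a + i) mod n) ([0..<j] @ [Suc j..<m+2]))"
  hence i: "i < Suc m" using assms by (simp del: upt_Suc)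
  have L: "length ([0..<j] @ [Suc j..<m+2]) = Suc m" using assms by (simp del: upt_Suc)
  have "([0..<j] @ [Suc j..<m+2]) ! i = (if i < j then i else Suc i)"
    using i assms by (auto simp: nth_append simp del: upt_Suc)
  moreover have "map (\<lambda>i. (a + i) mod n) ([0..<j] @ [Suc j..<m+2]) ! i = (a + ([0..<j] @ [Suc j..<m+2]) ! i) mod n"
    using L i by (intro nth_map) simp
  ultimately show "map (\<lambda>i. (a + i) mod n) ([0..<j] @ [Suc j..<m+2]) ! i = P n m a (ek (j-1)) ! i"
    using i assms by (auto simp: nth_P ps_ek simp del: upt_Suc map_append)
qed

lemma beta_eq:
  "beta n m a = (\<lambda>q. \<Sum>j=1..m. (-1)^(m-j) * epath (P n m a (ek (j-1))) q)"
  unfolding beta_def by (intro ext sum.cong refl) (subst beta_path, auto)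

lemma swp_ek: "swp k (ek k) = ek (Suc k)"
  by (auto simp: swp_def ek_def fun_eq_iff)

lemma part1_van:
  fixes v :: "nat list \<Rightarrow> 'k::field"
  assumes n: "5 \<le> n" and v: "v \<in> Omega n {1, 2} m"
    and z1: "\<And>a. a < n \<Longrightarrow> v (P n m a (\<lambda>_. 1)) = 0"
    and z2: "\<And>a. a < n \<Longrightarrow> v (P n m a (ek 0)) = 0"
  shows "v = 0"
proof
  have s: "1 < (2::nat)" "2 * 2 < n" using n by auto
  fix p show "v p = 0 p"
  proof (rule ccontr)
    assume "v p \<noteq> 0 p"
    hence nz: "v p \<noteq> 0" by simp
    then obtain a w where a: "a < n" and w: "\<forall>i<m. w i \<in> {1, 2}" and p: "p = P n m a w"
      using nonzero_is_P[OF s v] by blast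
    have B: "v (P n m a (ek k)) = 0" if "k < m" for k
      using that
    proof (induct k)
      case 0 thus ?case using z2 a by simp
    next
      case (Suc k)
      have wk: "\<forall>i<m. ek k i \<in> {1, 2}" by (simp add: ek_def)
      have nd: "ek k k + ek k (Suc k) \<notin> {1, 2}" by (simp add: ek_def)
      have "v (P n m a (ek k)) + (if ek k k = ek k (Suc k) then 0 else v (P n m a (swp k (ek k)))) = 0"
        using NC[OF s v a wk Suc.prems nd] .
      moreover have "ek k k \<noteq> ek k (Suc k)" by (simp add: ek_def)
      ultimately show ?case using Suc by (simp add: swp_ek)
    qed
    have A: "\<forall>w::nat\<Rightarrow>nat. (\<forall>l<m. w l \<in> {1, 2}) \<longrightarrow> w i = 2 \<longrightarrow> w (i + Suc d) = 2 \<longrightarrow> i + Suc d < m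
        \<longrightarrow> v (P n m a w) = 0" for i d
    proof (induct d)
      case 0
      show ?case
      proof (intro allI impI)
        fix w :: "nat \<Rightarrow> nat" assume h: "\<forall>l<m. w l \<in> {1, 2}" "w i = 2" "w (i + Suc 0) = 2" "i + Suc 0 < m"
        have nd: "w i + w (Suc i) \<notin> {1, 2}" using h by simp
        show "v (P n m a w) = 0" using NC[OF s v a h(1) _ nd] h by simp
      qed
    next
      case (Suc d)
      show ?case
      proof (intro allI impI)
        fix w :: "nat \<Rightarrow> nat" assume h: "\<forall>l<m. w l \<in> {1, 2}" "w i = 2" "w (i + Suc (Suc d)) = 2" "i + Suc (Suc d) < m"
        define k where "k = i + Suc d"
        have k: "Suc k < m" "w (Suc k) = 2" using h by (auto simp: k_def)
        show "v (P n m a w) = 0"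
        proof (cases "w k = 2")
          case True thus ?thesis using Suc h k unfolding k_def by auto
        next
          case False
          have "k < m" using k by simp
          hence "w k \<in> {1, 2}" using h(1) by blast
          hence wk1: "w k = 1" using False by auto
          have nd: "w k + w (Suc k) \<notin> {1, 2}" using wk1 k by simp
          have N: "v (P n m a w) + (if w k = w (Suc k) then 0 else v (P n m a (swp k w))) = 0"
            using NC[OF s v a h(1) k(1) nd] .
          have sw: "\<forall>l<m. swp k w l \<in> {1, 2}" using swp_in[OF h(1) k(1)] .
          have "swp k w i = 2" using h(2) by (simp add: swp_def k_def)
          moreover have "swp k w (i + Suc d) = 2" using k by (simp add: swp_def k_def)
          ultimately have "v (P n m a (swp k w)) = 0" using Suc sw k by (auto simp: k_def)
          thus ?thesis using N wk1 k by simp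
        qed
      qed
    qed
    have "v (P n m a w) = 0"
    proof (cases "\<forall>l<m. w l = 1")
      case True
      hence "P n m a w = P n m a (\<lambda>_. 1)" by (intro P_cong) simp
      thus ?thesis using z1 a by simp
    next
      case False
      then obtain k where k: "k < m" "w k = 2" using w by auto
      show ?thesis
      proof (cases "\<exists>k'<m. k' \<noteq> k \<and> w k' = 2")
        case True
        then obtain k' where k': "k' < m" "k' \<noteq> k" "w k' = 2" by auto
        define i where "i = min k k'"
        define d where "d = max k k' - i - 1"
        have "w i = 2" "w (i + Suc d) = 2" "i + Suc d < m"
          using k k' by (auto simp: i_def d_def min_def max_def)
        thus ?thesis using A[of i d] w by blast
      next
        case False
        hence "P n m a w = P n m a (ek k)"
          by (intro P_cong) (use w k in \<open>auto simp: ek_def\<close>)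
        thus ?thesis using B k by simp
      qed
    qed
    thus False using nz p by simp
  qed
qed

lemma del_swp:
  assumes "Suc i < m"
  shows "del_at (Suc i) (P n m a w) = del_at (Suc i) (P n m a (swp i w))"
proof (rule del_at_cong)
  show "length (P n m a w) = length (P n m a (swp i w))" by simp
  show "Suc i < length (P n m a w)" using assms by simp
  fix k assume "k < length (P n m a w)" "k \<noteq> Suc i"
  thus "P n m a w ! k = P n m a (swp i w) ! k" by (simp add: nth_P ps_swp_aux)
qed

lemma part1_A:
  fixes u :: "nat list \<Rightarrow> 'k::field"
  assumes n: "5 \<le> n" and w: "\<And>i. w i \<in> {1, 2}"
  shows "(epath (P n m a w) :: nat list \<Rightarrow> 'k) \<in> A_space n {1, 2} m"
    and "regular (P n m a w)" and "k \<le> m \<Longrightarrow> P n m a w ! k < n"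
proof -
  have wb: "0 < w i \<and> w i < n" for i using w[of i] n by auto
  show r: "regular (P n m a w)" using wb by (intro regular_P) auto
  have Sb: "\<And>t. t \<in> {1, 2} \<Longrightarrow> t < n" using n by auto
  have "allowed n {1, 2} (P n m a w)" using allowed_P[of n "{1,2}" m w a, OF _ Sb] n wb w by auto
  thus "(epath (P n m a w) :: nat list \<Rightarrow> 'k) \<in> A_space n {1, 2} m" using r by (intro epath_A) auto
  show "k \<le> m \<Longrightarrow> P n m a w ! k < n" using n by (simp add: nth_P)
qed

lemma part1_alpha_in:
  assumes n: "5 \<le> n" and m: "1 \<le> m"
  shows "(alpha n m a :: nat list \<Rightarrow> 'k::field) \<in> Omega n {1, 2} m"
proof -
  let ?R = "P n m a (\<lambda>_. 1)"
  have w: "\<And>i. (\<lambda>_. 1::nat) i \<in> {1, 2}" by simp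
  have RA1: "(epath ?R :: nat list \<Rightarrow> 'k) \<in> A_space n {1, 2} m" by (rule part1_A(1)[OF n w])
  have RA: "regular ?R" "\<And>k. k \<le> m \<Longrightarrow> ?R ! k < n" using part1_A(2,3)[OF n w] by auto
  have Sb: "\<And>t. t \<in> {1, 2} \<Longrightarrow> t < n" using n by auto
  have n0: "0 < n" using n by simp
  show ?thesis unfolding alpha_eq Omega_iff[OF m RA1]
  proof (intro allI impI)
    fix q :: "nat list" and j
    assume q: "length q = m" "regular q" "set q \<subseteq> {0..<n}" "0 < j" "j < m"
      "\<not> arrow n {1, 2} (q ! (j - 1)) (q ! j)"
    obtain i where i: "j = Suc i" using q by (cases j) auto
    have "(\<Sum>x<n. (epath ?R (ins j x q) :: 'k)) = (if del_at j ?R = q then 1 else 0)"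
      by (rule sum_epath_ins) (use RA q in auto)
    also have "\<dots> = 0"
    proof (rule ccontr)
      assume "(if del_at j ?R = q then 1 else 0 :: 'k) \<noteq> 0"
      hence d: "del_at (Suc i) ?R = q" using i by (simp split: if_splits)
      have "arrow n {1, 2} (q!i) (q!Suc i) \<longleftrightarrow> (\<lambda>_. 1::nat) i + (\<lambda>_. 1::nat) (Suc i) \<in> {1, 2}"
        by (rule del_P_arrow[where S="{1,2}", OF n0 _ _ _ d]) (use Sb n q i in auto)
      hence "arrow n {1, 2} (q!i) (q!Suc i)" by simp
      thus False using q i by simp
    qed
    finally show "(\<Sum>x<n. (epath ?R (ins j x q) :: 'k)) = 0" .
  qed
qed

lemma part1_beta_in:
  assumes n: "5 \<le> n" and m: "1 \<le> m"
  shows "(beta n m a :: nat list \<Rightarrow> 'k::field) \<in> Omega n {1, 2} m"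
proof -
  define B where "B k = P n m a (ek (k - 1))" for k
  define c where "c k = ((-1)^(m-k) :: 'k)" for k
  have be: "(beta n m a :: nat list \<Rightarrow> 'k) = (\<lambda>q. \<Sum>k\<in>{1..m}. c k * epath (B k) q)"
    by (simp add: beta_eq B_def c_def)
  have w: "\<And>k i. ek k i \<in> {1, 2}" by (simp add: ek_def)
  have BA: "(epath (B k) :: nat list \<Rightarrow> 'k) \<in> A_space n {1, 2} m" for k
    unfolding B_def by (rule part1_A(1)[OF n w])
  have Breg: "regular (B k)" "\<And>l. l \<le> m \<Longrightarrow> B k ! l < n" "length (B k) = Suc m" for k
    unfolding B_def using part1_A(2,3)[OF n w] by auto
  have A: "(beta n m a :: nat list \<Rightarrow> 'k) \<in> A_space n {1, 2} m"
    unfolding be by (rule A_lincomb) (rule BA)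
  have Sb: "\<And>t. t \<in> {1, 2} \<Longrightarrow> t < n" using n by auto
  have n0: "0 < n" using n by simp
  show ?thesis unfolding Omega_iff[OF m A]
  proof (intro allI impI)
    fix q :: "nat list" and j
    assume q: "length q = m" "regular q" "set q \<subseteq> {0..<n}" "0 < j" "j < m"
      "\<not> arrow n {1, 2} (q ! (j - 1)) (q ! j)"
    obtain i where i: "j = Suc i" using q by (cases j) auto
    define D where "D k = (if del_at j (B k) = q then 1 else (0::'k))" for k
    have sD: "(\<Sum>x<n. (epath (B k) (ins j x q) :: 'k)) = D k" for k
      unfolding D_def by (rule sum_epath_ins) (use Breg q in auto)
    have "(\<Sum>x<n. (beta n m a (ins j x q) :: 'k)) = (\<Sum>x<n. \<Sum>k\<in>{1..m}. c k * epath (B k) (ins j x q))"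
      by (simp add: be)
    also have "\<dots> = (\<Sum>k\<in>{1..m}. c k * (\<Sum>x<n. epath (B k) (ins j x q)))"
      by (subst sum.swap) (simp add: sum_distrib_left)
    also have "\<dots> = (\<Sum>k\<in>{1..m}. c k * D k)" by (simp add: sD)
    also have "\<dots> = (\<Sum>k\<in>{j, Suc j}. c k * D k)"
    proof (rule sum.mono_neutral_right)
      show "{j, Suc j} \<subseteq> {1..m}" using q i by auto
      show "\<forall>k\<in>{1..m} - {j, Suc j}. c k * D k = 0"
      proof
        fix k assume k: "k \<in> {1..m} - {j, Suc j}"
        have "D k = 0"
        proof (rule ccontr)
          assume "D k \<noteq> 0"
          hence d: "del_at (Suc i) (P n m a (ek (k - 1))) = q" using i by (simp add: D_def B_def split: if_splits)
          have "arrow n {1, 2} (q!i) (q!Suc i) \<longleftrightarrow> ek (k-1) i + ek (k-1) (Suc i) \<in> {1, 2}"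
            by (rule del_P_arrow[where S="{1,2}", OF n0 _ _ _ d]) (use Sb n q i in \<open>auto simp: ek_def\<close>)
          moreover have "ek (k-1) i + ek (k-1) (Suc i) = 2" using k i by (auto simp: ek_def)
          ultimately have "arrow n {1, 2} (q!i) (q!Suc i)" by simp
          thus False using q i by simp
        qed
        thus "c k * D k = 0" by simp
      qed
    qed simp
    also have "\<dots> = (c j + c (Suc j)) * D j"
    proof -
      have "del_at (Suc i) (B j) = del_at (Suc i) (B (Suc j))"
        unfolding B_def i using del_swp[of i m n a "ek i"] q i by (simp add: swp_ek)
      hence "D (Suc j) = D j" by (simp add: D_def i)
      thus ?thesis by (simp add: algebra_simps)
    qed
    also have "c j + c (Suc j) = 0"
    proof -
      have "m - j = Suc (m - Suc j)" using q by simp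
      thus ?thesis by (simp add: c_def)
    qed
    finally show "(\<Sum>x<n. (beta n m a (ins j x q) :: 'k)) = 0" by simp
  qed
qed

lemma ep12:
  assumes n: "5 \<le> n" "a < n" "b < n" and w: "\<And>i. w i \<in> {1, 2}" and w': "\<And>i. w' i \<in> {1, 2}"
  shows "(epath (P n m a w) (P n m b w') :: 'k::field) = (if a = b \<and> (\<forall>i<m. w i = w' i) then 1 else 0)"
proof (rule epath_P)
  show "a < n" "b < n" using n by auto
  fix i show "0 < w i \<and> w i < n \<and> w' i < n" using w[of i] w'[of i] n by auto
qed

lemma part1_vals:
  assumes n: "5 \<le> n" and m: "1 \<le> m" and ab: "a < n" "b < n"
  shows "(alpha n m a (P n m b (\<lambda>_. 1)) :: 'k::field) = (if a = b then 1 else 0)"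
    and "(alpha n m a (P n m b (ek 0)) :: 'k) = 0"
    and "(beta n m a (P n m b (\<lambda>_. 1)) :: 'k) = 0"
    and "(beta n m a (P n m b (ek 0)) :: 'k) = (if a = b then (-1)^(m-1) else 0)"
proof -
  have w1: "\<And>i. (\<lambda>_. 1::nat) i \<in> {1, 2}" by simp
  have we: "\<And>k i. ek k i \<in> {1, 2}" by (simp add: ek_def)
  have m0: "0 < m" using m by simp
  show "(alpha n m a (P n m b (\<lambda>_. 1)) :: 'k) = (if a = b then 1 else 0)"
    unfolding alpha_eq ep12[OF n ab w1 w1] by simp
  have "\<not> (\<forall>i<m. (1::nat) = ek 0 i)" using m0 by (auto simp: ek_def)
  thus "(alpha n m a (P n m b (ek 0)) :: 'k) = 0"
    unfolding alpha_eq ep12[OF n ab w1 we] by simp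
  have "(\<Sum>k=1..m. (-1)^(m-k) * (epath (P n m a (ek (k-1))) (P n m b (\<lambda>_. 1)) :: 'k)) = 0"
  proof (rule sum.neutral, rule ballI)
    fix k assume k: "k \<in> {1..m}"
    have "\<not> (\<forall>i<m. ek (k-1) i = 1)" using k by (auto simp: ek_def intro!: exI[of _ "k-1"])
    thus "(-1)^(m-k) * (epath (P n m a (ek (k-1))) (P n m b (\<lambda>_. 1)) :: 'k) = 0"
      unfolding ep12[OF n ab we w1] by simp
  qed
  thus "(beta n m a (P n m b (\<lambda>_. 1)) :: 'k) = 0" by (simp add: beta_eq)
  have "(\<Sum>k=1..m. (-1)^(m-k) * (epath (P n m a (ek (k-1))) (P n m b (ek 0)) :: 'k))
      = (\<Sum>k=1..m. if k = 1 then (if a = b then (-1)^(m-1) else 0) else 0)"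
  proof (rule sum.cong[OF refl])
    fix k assume k: "k \<in> {1..m}"
    have "(\<forall>i<m. ek (k-1) i = ek 0 i) \<longleftrightarrow> k = 1"
    proof
      assume "\<forall>i<m. ek (k-1) i = ek 0 i"
      hence "ek (k-1) 0 = ek 0 0" using m0 by blast
      thus "k = 1" using k by (auto simp: ek_def split: if_splits)
    qed simp
    thus "(-1)^(m-k) * (epath (P n m a (ek (k-1))) (P n m b (ek 0)) :: 'k)
        = (if k = 1 then (if a = b then (-1)^(m-1) else 0) else 0)"
      by (simp add: ep12[OF n ab we we])
  qed
  also have "\<dots> = (if a = b then (-1)^(m-1) else 0)" using m by simp
  finally show "(beta n m a (P n m b (ek 0)) :: 'k) = (if a = b then (-1)^(m-1) else 0)"
    by (simp add: beta_eq)
qed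

lemma part1_basis:
  assumes n: "5 \<le> n" and m: "1 \<le> m"
  shows "is_basis ((alpha n m ` {0..<n}) \<union> (beta n m ` {0..<n}) :: (nat list \<Rightarrow> 'k::field) set)
            (Omega n {1, 2} m)
     \<and> card ((alpha n m ` {0..<n}) \<union> (beta n m ` {0..<n}) :: (nat list \<Rightarrow> 'k) set) = 2 * n"
proof -
  let ?I = "{0..<n} <+> {0..<n}"
  define f :: "nat + nat \<Rightarrow> nat list \<Rightarrow> 'k" where "f = case_sum (alpha n m) (beta n m)"
  define pt where "pt = case_sum (\<lambda>a. P n m a (\<lambda>_. 1)) (\<lambda>a. P n m a (ek 0))"
  note V = part1_vals[OF n m, where 'k='k]
  have fI: "f ` ?I = (alpha n m ` {0..<n}) \<union> (beta n m ` {0..<n})"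
    by (auto simp: f_def Plus_def image_Un image_image)
  have cI: "card ?I = 2 * n" by (simp add: card_Plus)
  have "is_basis (f ` ?I) (Omega n {1, 2} m) \<and> card (f ` ?I) = card ?I"
  proof (rule basis_crit[where pt = pt])
    show "finite ?I" by simp
    show "f i (pt i) \<noteq> 0" if "i \<in> ?I" for i
      using that V by (auto simp: f_def pt_def)
    show "f j (pt i) = 0" if "i \<in> ?I" "j \<in> ?I" "j \<noteq> i" for i j
      using that V by (auto simp: f_def pt_def split: if_splits)
    show "f i \<in> Omega n {1, 2} m" if "i \<in> ?I" for i
      using that part1_alpha_in[OF n m] part1_beta_in[OF n m] by (auto simp: f_def)
    show "module.subspace cscale (Omega n {1, 2} m :: (nat list \<Rightarrow> 'k) set)" by (rule Omega_subspace)
    fix v :: "nat list \<Rightarrow> 'k" assume v1: "v \<in> Omega n {1, 2} m" and v2: "\<And>i. i \<in> ?I \<Longrightarrow> v (pt i) = 0"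
    show "v = 0"
    proof (rule part1_van[OF n v1])
      fix a assume a: "a < n"
      hence "Inl a \<in> ?I" "Inr a \<in> ?I" by auto
      thus "v (P n m a (\<lambda>_. 1)) = 0" "v (P n m a (ek 0)) = 0"
        using v2[of "Inl a"] v2[of "Inr a"] by (simp_all add: pt_def)
    qed
  qed
  thus ?thesis using fI cI by simp
qed

theorem mainTheorem7:
  fixes n s :: nat
  assumes "n \<ge> 5" and "1 < s" and "2 * s < n"
  shows "(s = 2 \<longrightarrow> (\<forall>m\<ge>1.
            card ((alpha n m ` {0..<n}) \<union> (beta n m ` {0..<n}) :: (nat list \<Rightarrow> 'k::field_char_0) set) = 2 * n
          \<and> is_basis ((alpha n m ` {0..<n}) \<union> (beta n m ` {0..<n}) :: (nat list \<Rightarrow> 'k) set)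
                     (Omega n {1, s} m)))
       \<and> (s \<noteq> 2 \<longrightarrow>
            card (gamma n s ` {0..<n} :: (nat list \<Rightarrow> 'k) set) = n
          \<and> is_basis (gamma n s ` {0..<n} :: (nat list \<Rightarrow> 'k) set) (Omega n {1, s} 2)
          \<and> (\<forall>m\<ge>3. Omega n {1, s} m = ({\<lambda>_. 0} :: (nat list \<Rightarrow> 'k) set)))"
proof (intro conjI impI allI)
  fix m :: nat assume s2: "s = 2" and m: "m \<ge> 1"
  note B = part1_basis[OF assms(1) m, where 'k='k]
  show "card ((alpha n m ` {0..<n}) \<union> (beta n m ` {0..<n}) :: (nat list \<Rightarrow> 'k) set) = 2 * n"
    using B by simp
  show "is_basis ((alpha n m ` {0..<n}) \<union> (beta n m ` {0..<n}) :: (nat list \<Rightarrow> 'k) set) (Omega n {1, s} m)"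
    using B s2 by simp
next
  assume s2: "s \<noteq> 2"
  note B = part2_basis[OF assms(2,3) s2, where 'k='k]
  show "card (gamma n s ` {0..<n} :: (nat list \<Rightarrow> 'k) set) = n" using B by simp
  show "is_basis (gamma n s ` {0..<n} :: (nat list \<Rightarrow> 'k) set) (Omega n {1, s} 2)" using B by simp
  fix m :: nat assume m: "m \<ge> 3"
  show "Omega n {1, s} m = ({\<lambda>_. 0} :: (nat list \<Rightarrow> 'k) set)"
  proof
    show "Omega n {1, s} m \<subseteq> ({\<lambda>_. 0} :: (nat list \<Rightarrow> 'k) set)"
      using part2_zero[OF assms(2,3) s2 m] by blast
    have "(0 :: nat list \<Rightarrow> 'k) \<in> Omega n {1, s} m"
      using module.subspace_0[OF module_cscale Omega_subspace] by blast
    thus "({\<lambda>_. 0} :: (nat list \<Rightarrow> 'k) set) \<subseteq> Omega n {1, s} m" by (simp add: zero_fun_def)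
  qed
qed

end
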